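(* Let $n\ge0$ be an integer with $\chi_n>c^2$, and let $x<y$ be two roots of $\psi_n$ in $(1,\infty)$. Then $$|\psi_n'(x)|\frac{x^2-1}{y^2-1}\le|\psi_n'(y)|\le|\psi_n'(x)|\sqrt{\frac{x^2-1}{x^2-\chi_n/c^2}\cdot\frac{y^2-\chi_n/c^2}{y^2-1}}.$$
   Context: For a real number $c>0$, let $\psi_0,\psi_1,\dots$ be the prolate spheroidal wave functions of band limit $c$: the real $L^2[-1,1]$-normalized eigenfunctions of $F_c[\varphi](x)=\int_{-1}^1\varphi(t)e^{icxt}\,dt$ with eigenvalues $\lambda_n$ ordered by $|\lambda_n|\ge|\lambda_{n+1}|$, extended to entire functions by $\lambda_n\psi_n(x)=\int_{-1}^1\psi_n(t)e^{icxt}\,dt$. $\chi_0<\chi_1<\dots$ are the positive numbers such that $\psi_n$ satisfies $(1-x^2)\psi''(x)-2x\psi'(x)+(\chi_n-c^2x^2)\psi(x)=0$ for all $x$. *)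

theory Defs
  imports "HOL-Analysis.Analysis"
begin

definition Fc :: "real \<Rightarrow> (real \<Rightarrow> real) \<Rightarrow> real \<Rightarrow> complex" where
  "Fc c \<phi> x = integral {-1..1} (\<lambda>t. complex_of_real (\<phi> t) * cis (c * x * t))"

definition Fc_eigenfun :: "real \<Rightarrow> complex \<Rightarrow> (real \<Rightarrow> real) \<Rightarrow> bool" where
  "Fc_eigenfun c \<mu> \<phi> \<longleftrightarrow>
     \<phi> measurable_on {-1..1} \<and> (\<lambda>t. (\<phi> t)\<^sup>2) integrable_on {-1..1} \<and>
     integral {-1..1} (\<lambda>t. (\<phi> t)\<^sup>2) \<noteq> 0 \<and>
     (\<forall>x\<in>{-1..1}. \<mu> * complex_of_real (\<phi> x) = Fc c \<phi> x)"

definition L2_orthonormal :: "nat \<Rightarrow> (nat \<Rightarrow> real \<Rightarrow> real) \<Rightarrow> bool" where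
  "L2_orthonormal m \<phi> \<longleftrightarrow>
     (\<forall>i<m. \<forall>j<m. integral {-1..1} (\<lambda>t. \<phi> i t * \<phi> j t) = (if i = j then 1 else 0))"

definition many_bigger_eigs :: "real \<Rightarrow> real \<Rightarrow> nat \<Rightarrow> bool" where
  "many_bigger_eigs c r m \<longleftrightarrow>
     (\<exists>\<phi> \<mu>. L2_orthonormal m \<phi> \<and> (\<forall>i<m. Fc_eigenfun c (\<mu> i) (\<phi> i) \<and> cmod (\<mu> i) > r))"

text \<open>psi is (up to sign) the n-th prolate spheroidal wave function psi_n of band limit c,
  with eigenvalue lam = lambda_n, extended to the whole real line by
  lam psi(x) = F_c[psi](x).  "n-th" in the ordering |lambda_0| >= |lambda_1| >= ... means:
  exactly n (counted with multiplicity) eigenvalues have modulus strictly larger than |lam|.\<close>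
definition is_PSWF :: "real \<Rightarrow> nat \<Rightarrow> (real \<Rightarrow> real) \<Rightarrow> complex \<Rightarrow> bool" where
  "is_PSWF c n \<psi> lam \<longleftrightarrow>
     Fc_eigenfun c lam \<psi> \<and> lam \<noteq> 0 \<and>
     integral {-1..1} (\<lambda>t. (\<psi> t)\<^sup>2) = 1 \<and>
     (\<forall>x::real. lam * complex_of_real (\<psi> x) = Fc c \<psi> x) \<and>
     many_bigger_eigs c (cmod lam) n \<and> \<not> many_bigger_eigs c (cmod lam) (Suc n)"

definition prolate_ode :: "real \<Rightarrow> real \<Rightarrow> (real \<Rightarrow> real) \<Rightarrow> bool" where
  "prolate_ode c chi \<psi> \<longleftrightarrow>
     (\<forall>x::real. (1 - x\<^sup>2) * deriv (deriv \<psi>) x - 2 * x * deriv \<psi> x + (chi - c\<^sup>2 * x\<^sup>2) * \<psi> x = 0)"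

end

theory Submission
  imports Defs "HOL-Complex_Analysis.Complex_Analysis"
begin


lemma cis_diff_le: "norm (cis a - cis b) \<le> \<bar>a - b\<bar>"
proof -
  have e: "(norm (cis a - cis b))\<^sup>2 = (2 * sin ((a-b)/2))\<^sup>2"
  proof -
    have "(norm (cis a - cis b))\<^sup>2 = (cos a - cos b)\<^sup>2 + (sin a - sin b)\<^sup>2"
      by (simp add: cmod_power2 cis.ctr)
    also have "\<dots> = 2 - 2 * cos (a - b)"
      by (simp add: cos_diff power2_eq_square algebra_simps)
    also have "cos (a - b) = 1 - 2 * (sin ((a-b)/2))\<^sup>2"
    proof -
      have "a - b = 2 * ((a-b)/2)" by simp
      then show ?thesis by (metis cos_double_sin)
    qed
    finally show ?thesis by (simp add: power_mult_distrib)
  qed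
  have "norm (cis a - cis b) = \<bar>2 * sin ((a-b)/2)\<bar>"
    using e by (metis norm_ge_zero power2_eq_iff_nonneg abs_ge_zero power2_abs)
  also have "\<dots> \<le> \<bar>a - b\<bar>" using abs_sin_x_le_abs_x[of "(a-b)/2"] by simp
  finally show ?thesis .
qed

lemma psi_abs_int:
  fixes \<psi> :: "real \<Rightarrow> real"
  assumes "\<psi> measurable_on {-1..1::real}" "(\<lambda>t. (\<psi> t)\<^sup>2) integrable_on {-1..1}"
  shows "\<psi> absolutely_integrable_on {-1..1}"
proof (rule measurable_bounded_by_integrable_imp_absolutely_integrable)
  show "\<psi> \<in> borel_measurable (lebesgue_on {-1..1})"
    using assms(1) measurable_on_iff_borel_measurable[of "{-1..1}" \<psi>] by simp
  show "(\<lambda>t. 1 + (\<psi> t)\<^sup>2) integrable_on {-1..1}"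
    using assms(2) by (intro integrable_add integrable_const_ivl)
  show "norm (\<psi> x) \<le> 1 + (\<psi> x)\<^sup>2" for x
  proof (cases "\<bar>\<psi> x\<bar> \<le> 1")
    case True
    have "norm (\<psi> x) = \<bar>\<psi> x\<bar>" by simp
    then show ?thesis using True zero_le_power2[of "\<psi> x"] by linarith
  next
    case False
    then have "\<bar>\<psi> x\<bar> * 1 \<le> \<bar>\<psi> x\<bar> * \<bar>\<psi> x\<bar>" by (intro mult_left_mono) auto
    then show ?thesis by (simp add: power2_eq_square)
  qed
  show "{-1..1::real} \<in> sets lebesgue" by simp
qed

lemma prod_int:
  fixes \<psi> :: "real \<Rightarrow> real"
  assumes "\<psi> absolutely_integrable_on {-1..1::real}"
  shows "(\<lambda>t. complex_of_real (\<psi> t) * cis (a * t)) absolutely_integrable_on {-1..1}"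
proof -
  have g: "(complex_of_real \<circ> \<psi>) absolutely_integrable_on {-1..1}"
    by (rule absolutely_integrable_linear[OF assms bounded_linear_of_real])
  have "(\<lambda>t. cis (a * t) * (complex_of_real \<circ> \<psi>) t) absolutely_integrable_on {-1..1}"
  proof (rule absolutely_integrable_bounded_measurable_product[OF bilinear_times _ _ _ g])
    show "(\<lambda>t. cis (a * t)) \<in> borel_measurable (lebesgue_on {-1..1})"
      by (intro continuous_imp_measurable_on_sets_lebesgue continuous_intros) auto
    show "bounded ((\<lambda>t. cis (a * t)) ` {-1..1})"
      by (auto simp: bounded_iff intro!: exI[of _ 1])
  qed auto
  then show ?thesis by (simp add: mult.commute o_def)
qed

lemma abs_int_abs:
  fixes \<psi> :: "real \<Rightarrow> real"
  assumes ai: "\<psi> absolutely_integrable_on {-1..1::real}"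
  shows "(\<lambda>t. \<bar>\<psi> t\<bar>) integrable_on {-1..1}"
  using ai unfolding absolutely_integrable_on_def by simp

lemma Fc_lip:
  fixes \<psi> :: "real \<Rightarrow> real"
  assumes ai: "\<psi> absolutely_integrable_on {-1..1::real}"
  shows "norm (Fc c \<psi> x - Fc c \<psi> y) \<le> integral {-1..1} (\<lambda>t. \<bar>\<psi> t\<bar>) * \<bar>c*x - c*y\<bar>"
proof -
  have i: "(\<lambda>t. complex_of_real (\<psi> t) * cis (a * t)) integrable_on {-1..1}" for a
    using prod_int[OF ai, of a] unfolding absolutely_integrable_on_def by simp
  have ia: "(\<lambda>t. \<bar>\<psi> t\<bar>) integrable_on {-1..1}"
    using abs_int_abs[OF ai] .
  have "Fc c \<psi> x - Fc c \<psi> y = integral {-1..1} (\<lambda>t. complex_of_real (\<psi> t) * cis (c*x * t) - complex_of_real (\<psi> t) * cis (c*y * t))"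
    unfolding Fc_def by (rule integral_diff[symmetric, OF i i])
  also have "norm \<dots> \<le> integral {-1..1} (\<lambda>t. \<bar>\<psi> t\<bar> * \<bar>c*x - c*y\<bar>)"
  proof (rule integral_norm_bound_integral)
    show "(\<lambda>t. complex_of_real (\<psi> t) * cis (c*x * t) - complex_of_real (\<psi> t) * cis (c*y * t)) integrable_on {-1..1}"
      by (rule integrable_diff[OF i i])
    show "(\<lambda>t. \<bar>\<psi> t\<bar> * \<bar>c*x - c*y\<bar>) integrable_on {-1..1}"
      using ia by (rule integrable_on_mult_left)
    fix t :: real assume t: "t \<in> {-1..1}"
    have "norm (complex_of_real (\<psi> t) * cis (c*x * t) - complex_of_real (\<psi> t) * cis (c*y * t))
        = \<bar>\<psi> t\<bar> * norm (cis (c*x * t) - cis (c*y * t))"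
      by (simp add: right_diff_distrib[symmetric] norm_mult)
    also have "\<dots> \<le> \<bar>\<psi> t\<bar> * \<bar>c*x*t - c*y*t\<bar>"
      by (intro mult_left_mono cis_diff_le) auto
    also have "\<bar>c*x*t - c*y*t\<bar> = \<bar>c*x - c*y\<bar> * \<bar>t\<bar>"
      by (simp add: left_diff_distrib[symmetric] abs_mult)
    also have "\<bar>\<psi> t\<bar> * (\<bar>c*x - c*y\<bar> * \<bar>t\<bar>) \<le> \<bar>\<psi> t\<bar> * \<bar>c*x - c*y\<bar>"
      using t by (intro mult_left_mono mult_left_le) auto
    finally show "norm (complex_of_real (\<psi> t) * cis (c*x * t) - complex_of_real (\<psi> t) * cis (c*y * t))
        \<le> \<bar>\<psi> t\<bar> * \<bar>c*x - c*y\<bar>" by simp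
  qed
  also have "\<dots> = integral {-1..1} (\<lambda>t. \<bar>\<psi> t\<bar>) * \<bar>c*x - c*y\<bar>"
    by (rule integral_mult_left)
  finally show ?thesis .
qed

lemma Fc_cont:
  fixes \<psi> :: "real \<Rightarrow> real"
  assumes ai: "\<psi> absolutely_integrable_on {-1..1::real}"
  shows "continuous_on UNIV (Fc c \<psi>)"
proof (rule lipschitz_on_continuous_on)
  show "lipschitz_on (integral {-1..1} (\<lambda>t. \<bar>\<psi> t\<bar>) * \<bar>c\<bar>) UNIV (Fc c \<psi>)"
  proof (rule lipschitz_onI)
    fix x y :: real
    have "dist (Fc c \<psi> x) (Fc c \<psi> y) \<le> integral {-1..1} (\<lambda>t. \<bar>\<psi> t\<bar>) * \<bar>c*x - c*y\<bar>"
      using Fc_lip[OF ai, of c x y] by (simp only: dist_norm)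
    also have "\<bar>c*x - c*y\<bar> = \<bar>c\<bar> * dist x y"
      by (simp add: dist_real_def right_diff_distrib[symmetric] abs_mult)
    finally show "dist (Fc c \<psi> x) (Fc c \<psi> y) \<le> integral {-1..1} (\<lambda>t. \<bar>\<psi> t\<bar>) * \<bar>c\<bar> * dist x y"
      by (simp only: mult.assoc)
    show "0 \<le> integral {-1..1} (\<lambda>t. \<bar>\<psi> t\<bar>) * \<bar>c\<bar>"
      by (intro mult_nonneg_nonneg integral_nonneg) (simp_all add: abs_int_abs[OF ai])
  qed
qed

lemma psi_cont:
  assumes "is_PSWF c n \<psi> lam"
  shows "continuous_on UNIV \<psi>"
proof -
  have eig: "Fc_eigenfun c lam \<psi>" and l0: "lam \<noteq> 0"
    and all: "\<And>x. lam * complex_of_real (\<psi> x) = Fc c \<psi> x"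
    using assms unfolding is_PSWF_def by auto
  have ai: "\<psi> absolutely_integrable_on {-1..1}"
    using eig unfolding Fc_eigenfun_def by (intro psi_abs_int) auto
  have e: "\<psi> = (\<lambda>x. Re (Fc c \<psi> x / lam))"
  proof
    fix x
    have "complex_of_real (\<psi> x) = Fc c \<psi> x / lam"
      using all[of x] l0 by (simp add: field_simps)
    then show "\<psi> x = Re (Fc c \<psi> x / lam)" by (metis Re_complex_of_real)
  qed
  have "continuous_on UNIV (\<lambda>x. Re (Fc c \<psi> x / lam))"
    by (intro continuous_intros Fc_cont[OF ai]) (use l0 in auto)
  then show ?thesis by (subst e) assumption
qed

lemma real_deriv_Re:
  assumes "(\<Psi> has_field_derivative D) (at (complex_of_real x))"
  shows "((\<lambda>t. Re (\<Psi> (complex_of_real t))) has_real_derivative Re D) (at x)"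
  using has_field_derivative_Re[OF has_vector_derivative_real_field[OF assms]] by simp

definition PsiC :: "real \<Rightarrow> (real \<Rightarrow> real) \<Rightarrow> complex \<Rightarrow> complex \<Rightarrow> complex" where
  "PsiC c \<psi> lam z = integral (cbox (-1) 1) (\<lambda>t. complex_of_real (\<psi> t) * exp (\<i> * (complex_of_real c * z * complex_of_real t))) * inverse lam"

lemma PsiC_holo:
  assumes cont: "continuous_on UNIV \<psi>"
  shows "PsiC c \<psi> lam holomorphic_on UNIV"
proof -
  have cs: "continuous_on S \<psi>" for S using cont continuous_on_subset by blast
  have "(\<lambda>z. integral (cbox (-1) 1) (\<lambda>t. complex_of_real (\<psi> t) * exp (\<i> * (complex_of_real c * z * complex_of_real t)))) holomorphic_on UNIV"
  proof (rule leibniz_rule_holomorphic[where fx = "\<lambda>z t. complex_of_real (\<psi> t) * (exp (\<i> * (complex_of_real c * z * complex_of_real t)) * (\<i> * (complex_of_real c * complex_of_real t)))"])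
    fix z :: complex and t :: real
    show "((\<lambda>z. complex_of_real (\<psi> t) * exp (\<i> * (complex_of_real c * z * complex_of_real t))) has_field_derivative
      complex_of_real (\<psi> t) * (exp (\<i> * (complex_of_real c * z * complex_of_real t)) * (\<i> * (complex_of_real c * complex_of_real t)))) (at z within UNIV)"
      by (auto intro!: derivative_eq_intros)
  next
    fix z :: complex
    show "(\<lambda>t. complex_of_real (\<psi> t) * exp (\<i> * (complex_of_real c * z * complex_of_real t))) integrable_on cbox (-1) 1"
      by (intro integrable_continuous continuous_intros cs)
  next
    have "continuous_on (UNIV \<times> cbox (-1) 1) (\<lambda>p. complex_of_real (\<psi> (snd p)) * (exp (\<i> * (complex_of_real c * fst p * complex_of_real (snd p))) * (\<i> * (complex_of_real c * complex_of_real (snd p)))))"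
      by (intro continuous_intros continuous_on_compose2[OF cont continuous_on_snd]) auto
    then show "continuous_on (UNIV \<times> cbox (-1) 1) (\<lambda>(z, t). complex_of_real (\<psi> t) * (exp (\<i> * (complex_of_real c * z * complex_of_real t)) * (\<i> * (complex_of_real c * complex_of_real t))))"
      by (simp add: case_prod_beta)
  qed auto
  then show ?thesis unfolding PsiC_def by (intro holomorphic_intros)
qed

lemma PsiC_real:
  assumes "is_PSWF c n \<psi> lam"
  shows "PsiC c \<psi> lam (complex_of_real x) = complex_of_real (\<psi> x)"
proof -
  have l0: "lam \<noteq> 0" and all: "\<And>x. lam * complex_of_real (\<psi> x) = Fc c \<psi> x"
    using assms unfolding is_PSWF_def by auto
  have "integral (cbox (-1) 1) (\<lambda>t. complex_of_real (\<psi> t) * exp (\<i> * (complex_of_real c * complex_of_real x * complex_of_real t)))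
     = Fc c \<psi> x"
    unfolding Fc_def cbox_interval by (simp add: cis_conv_exp)
  then show ?thesis unfolding PsiC_def using all[of x] l0 by (simp add: field_simps)
qed



lemma P_deriv:
  fixes \<psi> \<psi>1 \<psi>2 :: "real \<Rightarrow> real"
  assumes d0: "\<And>t. (\<psi> has_real_derivative \<psi>1 t) (at t)"
    and d1: "\<And>t. (\<psi>1 has_real_derivative \<psi>2 t) (at t)"
    and ode: "\<And>t. (1 - t\<^sup>2) * \<psi>2 t - 2 * t * \<psi>1 t + (chi - c\<^sup>2 * t\<^sup>2) * \<psi> t = 0"
  shows "((\<lambda>t. (t\<^sup>2 - 1) * \<psi>1 t) has_real_derivative (chi - c\<^sup>2 * t\<^sup>2) * \<psi> t) (at t)"
proof -
  have "((\<lambda>t. (t\<^sup>2 - 1) * \<psi>1 t) has_real_derivative (2 * t * \<psi>1 t + (t\<^sup>2 - 1) * \<psi>2 t)) (at t)"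
    by (auto intro!: derivative_eq_intros d1 simp: algebra_simps)
  moreover have "2 * t * \<psi>1 t + (t\<^sup>2 - 1) * \<psi>2 t = (chi - c\<^sup>2 * t\<^sup>2) * \<psi> t"
    using ode[of t] by (simp add: algebra_simps)
  ultimately show ?thesis by simp
qed

lemma root_location:
  fixes \<psi> \<psi>1 \<psi>2 :: "real \<Rightarrow> real"
  assumes d0: "\<And>t. (\<psi> has_real_derivative \<psi>1 t) (at t)"
    and d1: "\<And>t. (\<psi>1 has_real_derivative \<psi>2 t) (at t)"
    and ode: "\<And>t. (1 - t\<^sup>2) * \<psi>2 t - 2 * t * \<psi>1 t + (chi - c\<^sup>2 * t\<^sup>2) * \<psi> t = 0"
    and x0: "1 < x0" "\<psi> x0 = 0" "c\<^sup>2 * x0\<^sup>2 \<le> chi"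
  shows "\<forall>t\<in>{1..x0}. \<psi> t = 0"
proof -
  define H where "H = (\<lambda>t. ((t\<^sup>2 - 1) * \<psi>1 t) * \<psi> t)"
  have dP: "\<And>t. ((\<lambda>t. (t\<^sup>2 - 1) * \<psi>1 t) has_real_derivative (chi - c\<^sup>2 * t\<^sup>2) * \<psi> t) (at t)"
    by (rule P_deriv[OF d0 d1 ode])
  have dH: "(H has_real_derivative (chi - c\<^sup>2 * t\<^sup>2) * (\<psi> t)\<^sup>2 + (t\<^sup>2 - 1) * (\<psi>1 t)\<^sup>2) (at t)" for t
    unfolding H_def
    by (rule derivative_eq_intros dP d0 refl)+ (simp add: algebra_simps power2_eq_square)
  have nn: "0 \<le> (chi - c\<^sup>2 * t\<^sup>2) * (\<psi> t)\<^sup>2 + (t\<^sup>2 - 1) * (\<psi>1 t)\<^sup>2" if "1 \<le> t" "t \<le> x0" for t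
  proof -
    have "t\<^sup>2 \<le> x0\<^sup>2" using that by (intro power_mono) auto
    then have "c\<^sup>2 * t\<^sup>2 \<le> c\<^sup>2 * x0\<^sup>2" by (intro mult_left_mono) auto
    then have a: "0 \<le> chi - c\<^sup>2 * t\<^sup>2" using x0 by linarith
    have b: "0 \<le> t\<^sup>2 - 1" using that by (simp add: one_le_power)
    show ?thesis using a b by (intro add_nonneg_nonneg mult_nonneg_nonneg) auto
  qed
  have H1: "H 1 = 0" and Hx0: "H x0 = 0" unfolding H_def using x0 by auto
  have ex: "\<exists>y. (H has_real_derivative y) (at s) \<and> 0 \<le> y" if "1 \<le> s" "s \<le> x0" for s
    using dH nn that by blast
  have Hz: "H t = 0" if "1 \<le> t" "t \<le> x0" for t
  proof -
    have "H 1 \<le> H t"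
      by (rule DERIV_nonneg_imp_nondecreasing[OF that(1)]) (meson ex order_trans that(2))
    moreover have "H t \<le> H x0"
      by (rule DERIV_nonneg_imp_nondecreasing[OF that(2)]) (meson ex order_trans that(1))
    ultimately show ?thesis using H1 Hx0 by simp
  qed
  have d10: "\<psi>1 t = 0" if "1 < t" "t < x0" for t
  proof -
    have "((\<lambda>_. 0) has_real_derivative 0) (at t)" by simp
    then have "(H has_real_derivative 0) (at t)"
      by (rule has_field_derivative_transform_within_open[where S="{1<..<x0}"]) (use that Hz in auto)
    then have e: "(chi - c\<^sup>2 * t\<^sup>2) * (\<psi> t)\<^sup>2 + (t\<^sup>2 - 1) * (\<psi>1 t)\<^sup>2 = 0"
      using dH[of t] DERIV_unique by blast
    have "0 \<le> (chi - c\<^sup>2 * t\<^sup>2) * (\<psi> t)\<^sup>2"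
    proof -
      have "t\<^sup>2 \<le> x0\<^sup>2" using that by (intro power_mono) auto
      then have "c\<^sup>2 * t\<^sup>2 \<le> c\<^sup>2 * x0\<^sup>2" by (intro mult_left_mono) auto
      then show ?thesis using x0 by (intro mult_nonneg_nonneg) auto
    qed
    moreover have "0 < t\<^sup>2 - 1" using that by (simp add: one_less_power)
    ultimately have "(\<psi>1 t)\<^sup>2 = 0" using e
      by (smt (verit) mult_pos_pos zero_le_power2 zero_less_power2 mult_nonneg_nonneg)
    then show ?thesis by simp
  qed
  show ?thesis
  proof
    fix t assume t: "t \<in> {1..x0}"
    show "\<psi> t = 0"
    proof (cases "t = x0")
      case True then show ?thesis using x0 by simp
    next
      case False
      then have "t < x0" using t by auto
      have "\<psi> x0 = \<psi> t"
      proof (rule DERIV_isconst_end[OF \<open>t < x0\<close>])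
        show "continuous_on {t..x0} \<psi>"
          using d0 by (meson DERIV_isCont continuous_at_imp_continuous_on)
        fix s assume "t < s" "s < x0"
        then show "(\<psi> has_real_derivative 0) (at s)"
          using d0[of s] d10[of s] t by auto
      qed
      then show ?thesis using x0 by simp
    qed
  qed
qed

lemma ineqs:
  fixes \<psi> \<psi>1 \<psi>2 :: "real \<Rightarrow> real"
  assumes d0: "\<And>t. (\<psi> has_real_derivative \<psi>1 t) (at t)"
    and d1: "\<And>t. (\<psi>1 has_real_derivative \<psi>2 t) (at t)"
    and ode: "\<And>t. (1 - t\<^sup>2) * \<psi>2 t - 2 * t * \<psi>1 t + (chi - c\<^sup>2 * t\<^sup>2) * \<psi> t = 0"
    and c: "c > 0" and xy: "1 < x" "x < y" "\<psi> x = 0" "\<psi> y = 0" and cx: "c\<^sup>2 * x\<^sup>2 > chi"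
  shows "\<bar>\<psi>1 x\<bar> * ((x\<^sup>2 - 1) / (y\<^sup>2 - 1)) \<le> \<bar>\<psi>1 y\<bar> \<and>
         \<bar>\<psi>1 y\<bar> \<le> \<bar>\<psi>1 x\<bar> *
           sqrt ((x\<^sup>2 - 1) / (x\<^sup>2 - chi / c\<^sup>2) * ((y\<^sup>2 - chi / c\<^sup>2) / (y\<^sup>2 - 1)))"
proof -
  define P where "P = (\<lambda>t. (t\<^sup>2 - 1) * \<psi>1 t)"
  define R where "R = (\<lambda>t::real. (t\<^sup>2 - 1) * (c\<^sup>2 * t\<^sup>2 - chi))"
  define R' where "R' = (\<lambda>t::real. 2 * t * (c\<^sup>2 * t\<^sup>2 - chi) + 2 * c\<^sup>2 * t * (t\<^sup>2 - 1))"
  have dP: "\<And>t. (P has_real_derivative (chi - c\<^sup>2 * t\<^sup>2) * \<psi> t) (at t)"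
    unfolding P_def by (rule P_deriv[OF d0 d1 ode])
  have dR: "(R has_real_derivative R' t) (at t)" for t
    unfolding R_def R'_def by (rule derivative_eq_intros refl)+ (simp add: algebra_simps)
  have pos: "1 < t \<and> 0 < t\<^sup>2 - 1 \<and> 0 < c\<^sup>2 * t\<^sup>2 - chi \<and> 0 < R t \<and> 0 \<le> R' t" if "x \<le> t" for t
  proof -
    have t1: "1 < t" using that xy by linarith
    have a: "0 < t\<^sup>2 - 1" using t1 by (simp add: one_less_power)
    have "x\<^sup>2 \<le> t\<^sup>2" using that xy by (intro power_mono) auto
    then have "c\<^sup>2 * x\<^sup>2 \<le> c\<^sup>2 * t\<^sup>2" by (intro mult_left_mono) auto
    then have b: "0 < c\<^sup>2 * t\<^sup>2 - chi" using cx by linarith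
    have "0 < R t" unfolding R_def using a b by simp
    moreover have "0 \<le> R' t" unfolding R'_def using a b t1 by (intro add_nonneg_nonneg mult_nonneg_nonneg) auto
    ultimately show ?thesis using a b t1 by simp
  qed
  define F where "F = (\<lambda>t. (P t)\<^sup>2 + R t * (\<psi> t)\<^sup>2)"
  have dF: "(F has_real_derivative R' t * (\<psi> t)\<^sup>2) (at t)" for t
    unfolding F_def
    by (rule derivative_eq_intros dP dR d0 refl)+ (simp add: P_def R_def algebra_simps power2_eq_square)
  have "F x \<le> F y"
  proof (rule DERIV_nonneg_imp_nondecreasing[of x y])
    fix t assume t: "x \<le> t" "t \<le> y"
    have "0 \<le> R' t * (\<psi> t)\<^sup>2" using pos[OF t(1)] by simp
    then show "\<exists>d. (F has_real_derivative d) (at t) \<and> 0 \<le> d" using dF[of t] by blast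
  qed (use xy in auto)
  then have "(P x)\<^sup>2 \<le> (P y)\<^sup>2" unfolding F_def using xy by simp
  then have "\<bar>P x\<bar> \<le> \<bar>P y\<bar>" using abs_le_square_iff by blast
  then have "(x\<^sup>2 - 1) * \<bar>\<psi>1 x\<bar> \<le> (y\<^sup>2 - 1) * \<bar>\<psi>1 y\<bar>"
    unfolding P_def using pos[of x] pos[of y] xy by (simp add: abs_mult)
  then have low: "\<bar>\<psi>1 x\<bar> * ((x\<^sup>2 - 1) / (y\<^sup>2 - 1)) \<le> \<bar>\<psi>1 y\<bar>"
    using pos[of y] xy by (simp add: field_simps)
  define G where "G = (\<lambda>t. (P t)\<^sup>2 / R t + (\<psi> t)\<^sup>2)"
  have dG: "(G has_real_derivative - ((P t)\<^sup>2 * R' t / (R t)\<^sup>2)) (at t)" if "x \<le> t" for t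
  proof -
    have R0: "R t \<noteq> 0" using pos[OF that] by simp
    have Q0: "c\<^sup>2 * t\<^sup>2 - chi \<noteq> 0" and p0: "t\<^sup>2 - 1 \<noteq> 0" using pos[OF that] by auto
    have d: "(G has_real_derivative 2 * P t * ((chi - c\<^sup>2 * t\<^sup>2) * \<psi> t) / R t - (P t)\<^sup>2 * R' t / (R t)\<^sup>2 + 2 * \<psi> t * \<psi>1 t) (at t)"
      unfolding G_def
      apply (rule derivative_eq_intros dP dR d0 refl R0)+
      using R0 by (simp add: field_simps power2_eq_square)
    have key: "P t * (chi - c\<^sup>2 * t\<^sup>2) = - (\<psi>1 t * R t)"
      by (simp add: P_def R_def algebra_simps)
    have "2 * P t * ((chi - c\<^sup>2 * t\<^sup>2) * \<psi> t) / R t = 2 * (P t * (chi - c\<^sup>2 * t\<^sup>2)) * \<psi> t / R t"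
      by (simp add: algebra_simps)
    also have "\<dots> = - 2 * \<psi> t * \<psi>1 t" unfolding key using R0 by (simp add: field_simps)
    finally show ?thesis using d by simp
  qed
  have "G y \<le> G x"
  proof (rule DERIV_nonpos_imp_nonincreasing[of x y])
    fix t assume t: "x \<le> t" "t \<le> y"
    have "0 \<le> (P t)\<^sup>2 * R' t / (R t)\<^sup>2" using pos[OF t(1)] by simp
    then show "\<exists>d. (G has_real_derivative d) (at t) \<and> d \<le> 0" using dG[OF t(1)] by force
  qed (use xy in auto)
  then have "(P y)\<^sup>2 / R y \<le> (P x)\<^sup>2 / R x" unfolding G_def using xy by simp
  then have g: "(y\<^sup>2 - 1) * (\<psi>1 y)\<^sup>2 / (c\<^sup>2 * y\<^sup>2 - chi) \<le> (x\<^sup>2 - 1) * (\<psi>1 x)\<^sup>2 / (c\<^sup>2 * x\<^sup>2 - chi)"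
    unfolding P_def R_def using pos[of x] pos[of y] xy by (simp add: power2_eq_square ac_simps)
  define A where "A = (x\<^sup>2 - 1) / (x\<^sup>2 - chi / c\<^sup>2) * ((y\<^sup>2 - chi / c\<^sup>2) / (y\<^sup>2 - 1))"
  have A: "A = (x\<^sup>2 - 1) * (c\<^sup>2 * y\<^sup>2 - chi) / ((c\<^sup>2 * x\<^sup>2 - chi) * (y\<^sup>2 - 1))"
  proof -
    have ex: "x\<^sup>2 - chi / c\<^sup>2 = (c\<^sup>2 * x\<^sup>2 - chi) / c\<^sup>2" and ey: "y\<^sup>2 - chi / c\<^sup>2 = (c\<^sup>2 * y\<^sup>2 - chi) / c\<^sup>2"
      using c by (simp_all add: field_simps)
    have n1: "c\<^sup>2 * x\<^sup>2 - chi \<noteq> 0" "y\<^sup>2 - 1 \<noteq> 0" using pos[of x] pos[of y] xy by (simp_all del: diff_gt_0_iff_gt)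
    have gen: "\<And>a qx qy k d :: real. k \<noteq> 0 \<Longrightarrow> qx \<noteq> 0 \<Longrightarrow> d \<noteq> 0 \<Longrightarrow> a / (qx / k) * ((qy / k) / d) = a * qy / (qx * d)"
      by (simp add: field_simps)
    show ?thesis unfolding A_def ex ey using c n1 by (intro gen) auto
  qed
  have A0: "0 \<le> A" unfolding A using pos[of x] pos[of y] xy by simp
  have "(\<psi>1 y)\<^sup>2 \<le> (\<psi>1 x)\<^sup>2 * A"
  proof -
    have gen2: "\<And>py qy qx px u v :: real. 0 < py \<Longrightarrow> 0 < qy \<Longrightarrow> 0 < qx \<Longrightarrow> py * u / qy \<le> px * v / qx \<Longrightarrow> u \<le> v * (px * qy / (qx * py))"
      by (simp add: field_simps)
    show ?thesis unfolding A by (rule gen2[OF _ _ _ g]) (use pos[of x] pos[of y] xy in auto)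
  qed
  then have "sqrt ((\<psi>1 y)\<^sup>2) \<le> sqrt ((\<psi>1 x)\<^sup>2 * A)" by (rule real_sqrt_le_mono)
  then have up: "\<bar>\<psi>1 y\<bar> \<le> \<bar>\<psi>1 x\<bar> * sqrt A" by (simp add: real_sqrt_mult)
  show ?thesis using low up unfolding A_def by simp
qed


lemma islimpt_real_interval:
  assumes "1 < (x::real)"
  shows "complex_of_real ((1+x)/2) islimpt (complex_of_real ` {1<..<x})"
  unfolding islimpt_approachable
proof (intro allI impI)
  fix e :: real assume e: "0 < e"
  define d where "d = min (e/2) ((x-1)/4)"
  have d4: "d \<le> (x-1)/4" "d \<le> e/2" unfolding d_def by (simp_all add: min_def)
  have dp: "0 < d" unfolding d_def using e assms by simp
  have d: "0 < d" "d < e" "d < (x-1)/2" using e assms d4 dp by linarith+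
  have "1 < (1+x)/2 + d" using d assms by (simp add: field_simps)
  moreover have "(1+x)/2 + d < x" using d assms by (simp add: field_simps)
  ultimately have "(1+x)/2 + d \<in> {1<..<x}" by simp
  then have "complex_of_real ((1+x)/2 + d) \<in> complex_of_real ` {1<..<x}" by (rule imageI)
  moreover have "complex_of_real ((1+x)/2 + d) \<noteq> complex_of_real ((1+x)/2)" using d by (simp only: of_real_eq_iff)
  moreover have "dist (complex_of_real ((1+x)/2 + d)) (complex_of_real ((1+x)/2)) < e"
    using d by (simp only: dist_of_real) (simp add: dist_real_def)
  ultimately show "\<exists>x'\<in>complex_of_real ` {1<..<x}. x' \<noteq> complex_of_real ((1+x)/2) \<and> dist x' (complex_of_real ((1+x)/2)) < e"
    by blast
qed

theorem theorem35:
  fixes c chi x y :: real and n :: nat and \<psi> :: "real \<Rightarrow> real" and lam :: complex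
  assumes "c > 0"
    and "is_PSWF c n \<psi> lam"
    and "chi > 0" and "prolate_ode c chi \<psi>"
    and "chi > c\<^sup>2"
    and "1 < x" and "x < y" and "\<psi> x = 0" and "\<psi> y = 0"
  shows "\<bar>deriv \<psi> x\<bar> * ((x\<^sup>2 - 1) / (y\<^sup>2 - 1)) \<le> \<bar>deriv \<psi> y\<bar> \<and>
         \<bar>deriv \<psi> y\<bar> \<le> \<bar>deriv \<psi> x\<bar> *
           sqrt ((x\<^sup>2 - 1) / (x\<^sup>2 - chi / c\<^sup>2) * ((y\<^sup>2 - chi / c\<^sup>2) / (y\<^sup>2 - 1)))"
proof -
  have cont: "continuous_on UNIV \<psi>" by (rule psi_cont[OF assms(2)])
  define \<Psi> where "\<Psi> = PsiC c \<psi> lam"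
  have holo: "\<Psi> holomorphic_on UNIV" unfolding \<Psi>_def by (rule PsiC_holo[OF cont])
  have re: "\<And>t. \<Psi> (complex_of_real t) = complex_of_real (\<psi> t)"
    unfolding \<Psi>_def by (rule PsiC_real[OF assms(2)])
  define D1 where "D1 = deriv \<Psi>"
  define D2 where "D2 = deriv D1"
  have h1: "D1 holomorphic_on UNIV" unfolding D1_def by (rule holomorphic_deriv[OF holo open_UNIV])
  define \<psi>1 where "\<psi>1 = (\<lambda>t. Re (D1 (complex_of_real t)))"
  define \<psi>2 where "\<psi>2 = (\<lambda>t. Re (D2 (complex_of_real t)))"
  have \<psi>eq: "\<psi> = (\<lambda>t. Re (\<Psi> (complex_of_real t)))" using re by (simp add: fun_eq_iff)
  have d0: "(\<psi> has_real_derivative \<psi>1 t) (at t)" for t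
  proof -
    have "((\<lambda>t. Re (\<Psi> (complex_of_real t))) has_real_derivative \<psi>1 t) (at t)"
      unfolding \<psi>1_def D1_def by (rule real_deriv_Re[OF holomorphic_derivI[OF holo open_UNIV UNIV_I]])
    then show ?thesis using \<psi>eq by simp
  qed
  have d1: "(\<psi>1 has_real_derivative \<psi>2 t) (at t)" for t
    unfolding \<psi>1_def \<psi>2_def D2_def by (rule real_deriv_Re[OF holomorphic_derivI[OF h1 open_UNIV UNIV_I]])
  have dd: "deriv \<psi> = \<psi>1" by (rule ext, rule DERIV_imp_deriv[OF d0])
  have ddd: "deriv \<psi>1 = \<psi>2" by (rule ext, rule DERIV_imp_deriv[OF d1])
  have ode: "\<And>t. (1 - t\<^sup>2) * \<psi>2 t - 2 * t * \<psi>1 t + (chi - c\<^sup>2 * t\<^sup>2) * \<psi> t = 0"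
    using assms(4) unfolding prolate_ode_def dd ddd by blast
  have cx: "c\<^sup>2 * x\<^sup>2 > chi"
  proof (rule ccontr)
    assume "\<not> c\<^sup>2 * x\<^sup>2 > chi"
    then have le: "c\<^sup>2 * x\<^sup>2 \<le> chi" by simp
    have z: "\<forall>t\<in>{1..x}. \<psi> t = 0" by (rule root_location[OF d0 d1 ode assms(6) assms(8) le])
    have all0: "\<psi> s = 0" for s
    proof -
      have "\<Psi> (complex_of_real s) = 0"
      proof (rule analytic_continuation[of \<Psi> UNIV "complex_of_real ` {1<..<x}" "complex_of_real ((1+x)/2)" "complex_of_real s"])
        show "complex_of_real ((1+x)/2) islimpt (complex_of_real ` {1<..<x})"
          by (rule islimpt_real_interval[OF assms(6)])
        show "\<Psi> z = 0" if "z \<in> complex_of_real ` {1<..<x}" for z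
          using that z re by auto
      qed (use holo in auto)
      then show ?thesis using re[of s] by simp
    qed
    have "integral {-1..1} (\<lambda>t. (\<psi> t)\<^sup>2) = 1" using assms(2) unfolding is_PSWF_def by blast
    moreover have "integral {-1..1} (\<lambda>t. (\<psi> t)\<^sup>2) = 0" using all0 by simp
    ultimately show False by simp
  qed
  show ?thesis
    using ineqs[OF d0 d1 ode assms(1) assms(6) assms(7) assms(8) assms(9) cx] unfolding dd .
qed

end
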